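(* Let $Q_k^A,Q_k^B$ be the SDQ iterates and $w_k^A,w_k^B$ the associated noise vectors (see context). Define the upper comparison system \[ Q_{k+1}^{A_U}-Q^*=(I+\alpha\gamma DP\Pi_{Q_k^B}-\alpha D)(Q_k^{A_U}-Q^* )+\alpha w_k^A,\qquad Q_{k+1}^{B_U}-Q^*=(I+\alpha\gamma DP\Pi_{Q_k^A}-\alpha D)(Q_k^{B_U}-Q^* )+\alpha w_k^B, \] with arbitrary initial vectors $Q_0^{A_U},Q_0^{B_U}\in\mathbb{R}^{|\mathcal{S}||\mathcal{A}|}$. Suppose $Q_0^{A_U}-Q^*\ge Q_0^A-Q^*$ and $Q_0^{B_U}-Q^*\ge Q_0^B-Q^*$ element-wise. Then for all $k\ge 0$, $Q_k^{A_U}-Q^*\ge Q_k^A-Q^*$ and $Q_k^{B_U}-Q^*\ge Q_k^B-Q^*$ element-wise.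
   Context: Finite MDP with states $\mathcal{S}=\{1,\dots,|\mathcal{S}|\}$, actions $\mathcal{A}=\{1,\dots,|\mathcal{A}|\}$, transitions $P(s'|s,a)$, bounded deterministic reward $r(s,a,s')$, discount $\gamma\in(0,1)$, optimal action-value function $Q^*$. Sampling distribution $d(s,a)>0$ on $\mathcal{S}\times\mathcal{A}$; at iteration $k$, $(s_k,a_k)\sim d$ i.i.d., $s_k'\sim P(\cdot|s_k,a_k)$, $r_{k+1}=r(s_k,a_k,s_k')$. Constant step-size $\alpha\in(0,1)$. SDQ: only entry $(s_k,a_k)$ is updated, $Q_{k+1}^A(s_k,a_k)=Q_k^A(s_k,a_k)+\alpha\{r_{k+1}+\gamma Q_k^A(s_k',\arg\max_aQ_k^B(s_k',a))-Q_k^A(s_k,a_k)\}$ and symmetrically for $B$ with roles of $A,B$ swapped. Vector notation: $Q\in\mathbb{R}^{|\mathcal{S}||\mathcal{A}|}$ stacks $Q(\cdot,1),\dots,Q(\cdot,|\mathcal{A}|)$, so $Q(s,a)=(e_a\otimes e_s)^TQ$. $D$ is the diagonal matrix with entry $d(s,a)$ at position $(s,a)$. $P\in\mathbb{R}^{|\mathcal{S}||\mathcal{A}|\times|\mathcal{S}|}$ has row $(s,a)$ equal to $P(\cdot|s,a)$. $R\in\mathbb{R}^{|\mathcal{S}||\mathcal{A}|}$, $R(s,a)=\mathbb{E}[r(s,a,s')|s,a]$. For $Q$, $\pi_Q(s)=\arg\max_aQ(s,a)$ (fixed tie-breaking) and $\Pi_Q\in\mathbb{R}^{|\mathcal{S}|\times|\mathcal{S}||\mathcal{A}|}$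 has $s$-th row $e_{\pi_Q(s)}^T\otimes e_s^T$, so $(\Pi_QQ')(s)=Q'(s,\pi_Q(s))$. Noise: $w_k^A=(e_{a_k}\otimes e_{s_k})r_{k+1}+\gamma(e_{a_k}\otimes e_{s_k})e_{s_k'}^T\Pi_{Q_k^B}Q_k^A-(e_{a_k}\otimes e_{s_k})(e_{a_k}\otimes e_{s_k})^TQ_k^A-(DR+\gamma DP\Pi_{Q_k^B}Q_k^A-DQ_k^A)$, and $w_k^B$ is the same with $A$ and $B$ swapped. Element-wise inequalities between vectors are denoted $\ge$. *)

theory Defs
  imports "HOL-Analysis.Analysis"
begin

text \<open>P s a s' = P(s'|s,a); rw s a s' = r(s,a,s'); d = sampling distribution;
  sel = greedy selector with a fixed tie-breaking rule.\<close>

definition expR :: "('s::finite \<Rightarrow> 'a::finite \<Rightarrow> 's \<Rightarrow> real) \<Rightarrow> ('s \<Rightarrow> 'a \<Rightarrow> 's \<Rightarrow> real) \<Rightarrow> real^('s \<times> 'a)" where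
  "expR P rw = (\<chi> i. case i of (s,a) \<Rightarrow> \<Sum>s'\<in>UNIV. P s a s' * rw s a s')"

definition Dmat :: "('s::finite \<times> 'a::finite \<Rightarrow> real) \<Rightarrow> real^('s \<times> 'a)^('s \<times> 'a)" where
  "Dmat d = (\<chi> i j. if i = j then d i else 0)"

definition Pmat :: "('s::finite \<Rightarrow> 'a::finite \<Rightarrow> 's \<Rightarrow> real) \<Rightarrow> real^'s^('s \<times> 'a)" where
  "Pmat P = (\<chi> i s'. case i of (s,a) \<Rightarrow> P s a s')"

definition Pimat :: "(real^('s::finite \<times> 'a::finite) \<Rightarrow> 's \<Rightarrow> 'a) \<Rightarrow> real^('s \<times> 'a) \<Rightarrow> real^('s \<times> 'a)^'s" where
  "Pimat sel Q = (\<chi> s j. if j = (s, sel Q s) then 1 else 0)"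

definition greedy_selector :: "(real^('s::finite \<times> 'a::finite) \<Rightarrow> 's \<Rightarrow> 'a) \<Rightarrow> bool" where
  "greedy_selector sel \<longleftrightarrow> (\<forall>Q s b. Q $ (s,b) \<le> Q $ (s, sel Q s))"

definition is_stochastic :: "('s::finite \<Rightarrow> 'a::finite \<Rightarrow> 's \<Rightarrow> real) \<Rightarrow> bool" where
  "is_stochastic P \<longleftrightarrow> (\<forall>s a s'. 0 \<le> P s a s') \<and> (\<forall>s a. (\<Sum>s'\<in>UNIV. P s a s') = 1)"

definition is_optimal_Q :: "('s::finite \<Rightarrow> 'a::finite \<Rightarrow> 's \<Rightarrow> real) \<Rightarrow> ('s \<Rightarrow> 'a \<Rightarrow> 's \<Rightarrow> real) \<Rightarrow> real \<Rightarrow> real^('s \<times> 'a) \<Rightarrow> bool" where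
  "is_optimal_Q P rw \<gamma> Q \<longleftrightarrow> (\<forall>s a. Q $ (s,a) = expR P rw $ (s,a) + \<gamma> * (\<Sum>s'\<in>UNIV. P s a s' * Max (range (\<lambda>b. Q $ (s',b)))))"

definition sdq_step :: "(real^('s::finite \<times> 'a::finite) \<Rightarrow> 's \<Rightarrow> 'a) \<Rightarrow> ('s \<Rightarrow> 'a \<Rightarrow> 's \<Rightarrow> real) \<Rightarrow> real \<Rightarrow> real
    \<Rightarrow> real^('s \<times> 'a) \<Rightarrow> real^('s \<times> 'a) \<Rightarrow> 's \<times> 'a \<times> 's \<Rightarrow> real^('s \<times> 'a)" where
  "sdq_step sel rw \<gamma> \<alpha> Q1 Q2 smp = (case smp of (s,a,s') \<Rightarrow>
     Q1 + (\<alpha> * (rw s a s' + \<gamma> * Q1 $ (s', sel Q2 s') - Q1 $ (s,a))) *\<^sub>R axis (s,a) 1)"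

fun sdq :: "(real^('s::finite \<times> 'a::finite) \<Rightarrow> 's \<Rightarrow> 'a) \<Rightarrow> ('s \<Rightarrow> 'a \<Rightarrow> 's \<Rightarrow> real) \<Rightarrow> real \<Rightarrow> real
    \<Rightarrow> real^('s \<times> 'a) \<Rightarrow> real^('s \<times> 'a) \<Rightarrow> (nat \<Rightarrow> 's \<times> 'a \<times> 's) \<Rightarrow> nat \<Rightarrow> (real^('s \<times> 'a)) \<times> (real^('s \<times> 'a))" where
  "sdq sel rw \<gamma> \<alpha> QA0 QB0 smp 0 = (QA0, QB0)"
| "sdq sel rw \<gamma> \<alpha> QA0 QB0 smp (Suc k) = (case sdq sel rw \<gamma> \<alpha> QA0 QB0 smp k of (QA, QB) \<Rightarrow>
     (sdq_step sel rw \<gamma> \<alpha> QA QB (smp k), sdq_step sel rw \<gamma> \<alpha> QB QA (smp k)))"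

definition noise :: "('s::finite \<Rightarrow> 'a::finite \<Rightarrow> 's \<Rightarrow> real) \<Rightarrow> ('s \<Rightarrow> 'a \<Rightarrow> 's \<Rightarrow> real) \<Rightarrow> real
    \<Rightarrow> ('s \<times> 'a \<Rightarrow> real) \<Rightarrow> (real^('s \<times> 'a) \<Rightarrow> 's \<Rightarrow> 'a)
    \<Rightarrow> real^('s \<times> 'a) \<Rightarrow> real^('s \<times> 'a) \<Rightarrow> 's \<times> 'a \<times> 's \<Rightarrow> real^('s \<times> 'a)" where
  "noise P rw \<gamma> d sel Q1 Q2 smp = (case smp of (s,a,s') \<Rightarrow>
     let e = axis (s,a) (1::real) in
       rw s a s' *\<^sub>R e + (\<gamma> * ((Pimat sel Q2 *v Q1) $ s')) *\<^sub>R e - (e \<bullet> Q1) *\<^sub>R e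
       - (Dmat d *v expR P rw + \<gamma> *\<^sub>R ((Dmat d ** Pmat P ** Pimat sel Q2) *v Q1) - Dmat d *v Q1))"

fun upper :: "('s::finite \<Rightarrow> 'a::finite \<Rightarrow> 's \<Rightarrow> real) \<Rightarrow> ('s \<Rightarrow> 'a \<Rightarrow> 's \<Rightarrow> real) \<Rightarrow> real
    \<Rightarrow> ('s \<times> 'a \<Rightarrow> real) \<Rightarrow> real \<Rightarrow> (real^('s \<times> 'a) \<Rightarrow> 's \<Rightarrow> 'a) \<Rightarrow> real^('s \<times> 'a)
    \<Rightarrow> real^('s \<times> 'a) \<Rightarrow> real^('s \<times> 'a) \<Rightarrow> real^('s \<times> 'a) \<Rightarrow> real^('s \<times> 'a)
    \<Rightarrow> (nat \<Rightarrow> 's \<times> 'a \<times> 's) \<Rightarrow> nat \<Rightarrow> (real^('s \<times> 'a)) \<times> (real^('s \<times> 'a))" where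
  "upper P rw \<gamma> d \<alpha> sel Qs QA0 QB0 QAU0 QBU0 smp 0 = (QAU0, QBU0)"
| "upper P rw \<gamma> d \<alpha> sel Qs QA0 QB0 QAU0 QBU0 smp (Suc k) =
    (case upper P rw \<gamma> d \<alpha> sel Qs QA0 QB0 QAU0 QBU0 smp k of (QAU, QBU) \<Rightarrow>
     case sdq sel rw \<gamma> \<alpha> QA0 QB0 smp k of (QA, QB) \<Rightarrow>
     (Qs + (mat 1 + (\<alpha> * \<gamma>) *\<^sub>R (Dmat d ** Pmat P ** Pimat sel QB) - \<alpha> *\<^sub>R Dmat d) *v (QAU - Qs)
         + \<alpha> *\<^sub>R noise P rw \<gamma> d sel QA QB (smp k),
      Qs + (mat 1 + (\<alpha> * \<gamma>) *\<^sub>R (Dmat d ** Pmat P ** Pimat sel QA) - \<alpha> *\<^sub>R Dmat d) *v (QBU - Qs)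
         + \<alpha> *\<^sub>R noise P rw \<gamma> d sel QB QA (smp k)))"

end

theory Submission imports Defs begin
lemma ifm: "(if c then a else b) * (x::real) = (if c then a*x else b*x)" by simp
lemma Dv: "(Dmat d *v x) $ i = d i * x $ i"
  by (simp add: Dmat_def matrix_vector_mult_def ifm cong: if_cong)
lemma Piv: "(Pimat sel Q *v x) $ s = x $ (s, sel Q s)"
  by (simp add: Pimat_def matrix_vector_mult_def ifm cong: if_cong)
lemma PPv: "((Dmat d ** Pmat P ** Pimat sel Q) *v x) $ (s,a) = d (s,a) * (\<Sum>s'\<in>UNIV. P s a s' * x $ (s', sel Q s'))"
proof -
  have "((Dmat d ** Pmat P ** Pimat sel Q) *v x) = Dmat d *v (Pmat P *v (Pimat sel Q *v x))"
    by (simp add: matrix_vector_mul_assoc matrix_mul_assoc)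
  moreover have "(Pmat P *v y) $ (s,a) = (\<Sum>s'\<in>UNIV. P s a s' * y $ s')" for y
    by (simp add: Pmat_def matrix_vector_mult_def)
  ultimately show ?thesis by (simp add: Dv Piv)
qed
lemma Mv: "((mat 1 + c *\<^sub>R A - b *\<^sub>R Dmat d) *v x) $ i = x $ i + c * (A *v x) $ i - b * d i * x $ i"
proof -
  have "((mat 1 + c *\<^sub>R A - b *\<^sub>R Dmat d) *v x) = (mat 1 *v x) + c *\<^sub>R (A *v x) - b *\<^sub>R (Dmat d *v x)"
    by (simp add: matrix_vector_mult_add_rdistrib matrix_vector_mult_diff_rdistrib scaleR_matrix_vector_assoc)
  then show ?thesis by (simp add: Dv)
qed
lemma noise_c: "noise P rw \<gamma> d sel Q1 Q2 (s0,a0,s1) $ i =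
   (if i = (s0,a0) then rw s0 a0 s1 + \<gamma> * Q1 $ (s1, sel Q2 s1) - Q1 $ (s0,a0) else 0)
   - (d i * expR P rw $ i + \<gamma> * ((Dmat d ** Pmat P ** Pimat sel Q2) *v Q1) $ i - d i * Q1 $ i)"
  by (simp add: noise_def Let_def Piv Dv axis_def inner_vec_def ifm cong: if_cong)
lemma step_c: "sdq_step sel rw \<gamma> \<alpha> Q1 Q2 (s0,a0,s1) $ i = Q1 $ i + \<alpha> * noise P rw \<gamma> d sel Q1 Q2 (s0,a0,s1) $ i
   + \<alpha> * (d i * expR P rw $ i + \<gamma> * ((Dmat d ** Pmat P ** Pimat sel Q2) *v Q1) $ i - d i * Q1 $ i)"
  by (simp add: noise_c sdq_step_def axis_def algebra_simps)
lemma arith: fixes Qsi R \<gamma> Mx xu QA \<alpha> d T Y S n :: real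
  assumes "Qsi = R + \<gamma>*Mx" "0 \<le> ((xu - Qsi) - (QA - Qsi))*(1-\<alpha>*d)"
   "0 \<le> \<alpha>*\<gamma>*d*(T - Y + S)" "0 \<le> \<alpha>*d*(\<gamma>*(Mx - S))"
  shows "QA + \<alpha>*n + \<alpha>*(d*R + \<gamma>*(d*Y) - d*QA) - Qsi \<le> Qsi + ((xu - Qsi) + \<alpha>*\<gamma>*(d*T) - \<alpha>*d*(xu - Qsi)) + \<alpha>*n - Qsi"
proof -
  have "(Qsi + ((xu - Qsi) + \<alpha>*\<gamma>*(d*T) - \<alpha>*d*(xu - Qsi)) + \<alpha>*n - Qsi) - (QA + \<alpha>*n + \<alpha>*(d*R + \<gamma>*(d*Y) - d*QA) - Qsi)
    = ((xu - Qsi) - (QA - Qsi))*(1-\<alpha>*d) + \<alpha>*\<gamma>*d*(T - Y + S) + \<alpha>*d*(\<gamma>*(Mx - S))"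
    using assms(1) by (simp add: algebra_simps)
  then show ?thesis using assms(2-4) by linarith
qed

lemma step_le:
  fixes QA QB QAU Qs :: "real^('s::finite \<times> 'a::finite)"
  assumes st: "is_stochastic P" and g: "0 < \<gamma>"
    and dp: "\<forall>i. 0 < d i" and ds: "(\<Sum>i\<in>UNIV. d i) = 1"
    and al: "0 < \<alpha>" "\<alpha> < 1"
    and opt: "is_optimal_Q P rw \<gamma> Qs"
    and hyp: "\<forall>i. (QAU - Qs) $ i \<ge> (QA - Qs) $ i"
  shows "(Qs + (mat 1 + (\<alpha> * \<gamma>) *\<^sub>R (Dmat d ** Pmat P ** Pimat sel QB) - \<alpha> *\<^sub>R Dmat d) *v (QAU - Qs)
         + \<alpha> *\<^sub>R noise P rw \<gamma> d sel QA QB smp - Qs) $ i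
     \<ge> (sdq_step sel rw \<gamma> \<alpha> QA QB smp - Qs) $ i"
proof -
  obtain s0 a0 s1 where sm: "smp = (s0,a0,s1)" by (cases smp) auto
  obtain s a where i: "i = (s,a)" by (cases i) auto
  define T where "T = (\<Sum>s'\<in>UNIV. P s a s' * (QAU - Qs) $ (s', sel QB s'))"
  define Y where "Y = (\<Sum>s'\<in>UNIV. P s a s' * QA $ (s', sel QB s'))"
  define S where "S = (\<Sum>s'\<in>UNIV. P s a s' * Qs $ (s', sel QB s'))"
  define Mx where "Mx = (\<Sum>s'\<in>UNIV. P s a s' * Max (range (\<lambda>b. Qs $ (s',b))))"
  have Pn: "\<And>s'. 0 \<le> P s a s'" using st by (simp add: is_stochastic_def)
  have "Y - S = (\<Sum>s'\<in>UNIV. P s a s' * (QA - Qs) $ (s', sel QB s'))"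
    by (simp add: Y_def S_def right_diff_distrib sum_subtractf)
  also have "\<dots> \<le> T" unfolding T_def
    by (rule sum_mono, rule mult_left_mono[OF _ Pn]) (use hyp in blast)
  finally have TY: "Y - S \<le> T" .
  have SM: "S \<le> Mx" unfolding S_def Mx_def
    by (rule sum_mono, rule mult_left_mono[OF _ Pn], rule Max_ge) auto
  have Bq: "Qs $ (s,a) = expR P rw $ (s,a) + \<gamma> * Mx"
    using opt unfolding is_optimal_Q_def Mx_def by blast
  have d1: "d (s,a) \<le> 1"
  proof -
    have "d (s,a) \<le> (\<Sum>i\<in>UNIV. d i)" by (rule member_le_sum) (auto simp: dp less_imp_le)
    then show ?thesis using ds by simp
  qed
  have dpos: "0 < d (s,a)" using dp by simp
  have z: "0 \<le> (QAU - Qs) $ (s,a) - (QA - Qs) $ (s,a)" using hyp by force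
  have t1: "0 \<le> ((QAU - Qs) $ (s,a) - (QA - Qs) $ (s,a)) * (1 - \<alpha> * d (s,a))"
  proof -
    have "\<alpha> * d (s,a) \<le> 1" using al d1 dpos by (intro mult_le_one) auto
    then show ?thesis using z by simp
  qed
  have t2: "0 \<le> (\<alpha> * \<gamma> * d (s,a)) * (T - Y + S)"
    using TY al g dpos by (intro mult_nonneg_nonneg) auto
  have t3: "0 \<le> (\<alpha> * d (s,a)) * (\<gamma> * (Mx - S))"
    using SM al g dpos by (intro mult_nonneg_nonneg) auto
  have hL: "(Qs + (mat 1 + (\<alpha> * \<gamma>) *\<^sub>R (Dmat d ** Pmat P ** Pimat sel QB) - \<alpha> *\<^sub>R Dmat d) *v (QAU - Qs)
         + \<alpha> *\<^sub>R noise P rw \<gamma> d sel QA QB smp - Qs) $ (s,a)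
     = Qs$(s,a) + ((QAU$(s,a) - Qs$(s,a)) + \<alpha>*\<gamma>*(d (s,a)*T) - \<alpha>*d (s,a)*(QAU$(s,a) - Qs$(s,a))) + \<alpha>*noise P rw \<gamma> d sel QA QB smp $ (s,a) - Qs$(s,a)"
    by (simp only: vector_add_component vector_minus_component vector_scaleR_component real_scaleR_def Mv PPv T_def)
  have hR: "(sdq_step sel rw \<gamma> \<alpha> QA QB smp - Qs) $ (s,a) = QA$(s,a) + \<alpha>*noise P rw \<gamma> d sel QA QB smp $ (s,a)
     + \<alpha>*(d (s,a) * expR P rw $ (s,a) + \<gamma>*(d (s,a)*Y) - d (s,a)*QA$(s,a)) - Qs$(s,a)"
    unfolding sm vector_minus_component step_c[where d=d and P=P] PPv Y_def ..
  show ?thesis unfolding i hL hR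
    by (rule arith[OF Bq _ t2 t3]) (use t1 in simp)
qed
theorem proposition1:
  fixes P :: "'s::finite \<Rightarrow> 'a::finite \<Rightarrow> 's \<Rightarrow> real"
    and rw :: "'s \<Rightarrow> 'a \<Rightarrow> 's \<Rightarrow> real"
    and d :: "'s \<times> 'a \<Rightarrow> real"
    and \<gamma> \<alpha> :: real
    and sel :: "real^('s \<times> 'a) \<Rightarrow> 's \<Rightarrow> 'a"
    and Qs QA0 QB0 QAU0 QBU0 :: "real^('s \<times> 'a)"
    and smp :: "nat \<Rightarrow> 's \<times> 'a \<times> 's"
  assumes "is_stochastic P"
    and "0 < \<gamma>" and "\<gamma> < 1"
    and "\<forall>i. 0 < d i" and "(\<Sum>i\<in>UNIV. d i) = 1"
    and "0 < \<alpha>" and "\<alpha> < 1"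
    and "greedy_selector sel"
    and "is_optimal_Q P rw \<gamma> Qs"
    and "\<forall>i. (QAU0 - Qs) $ i \<ge> (QA0 - Qs) $ i"
    and "\<forall>i. (QBU0 - Qs) $ i \<ge> (QB0 - Qs) $ i"
  shows "\<forall>k i.
      (fst (upper P rw \<gamma> d \<alpha> sel Qs QA0 QB0 QAU0 QBU0 smp k) - Qs) $ i
        \<ge> (fst (sdq sel rw \<gamma> \<alpha> QA0 QB0 smp k) - Qs) $ i
    \<and> (snd (upper P rw \<gamma> d \<alpha> sel Qs QA0 QB0 QAU0 QBU0 smp k) - Qs) $ i
        \<ge> (snd (sdq sel rw \<gamma> \<alpha> QA0 QB0 smp k) - Qs) $ i"
proof -
  have "\<forall>i. (fst (upper P rw \<gamma> d \<alpha> sel Qs QA0 QB0 QAU0 QBU0 smp k) - Qs) $ i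
        \<ge> (fst (sdq sel rw \<gamma> \<alpha> QA0 QB0 smp k) - Qs) $ i
    \<and> (snd (upper P rw \<gamma> d \<alpha> sel Qs QA0 QB0 QAU0 QBU0 smp k) - Qs) $ i
        \<ge> (snd (sdq sel rw \<gamma> \<alpha> QA0 QB0 smp k) - Qs) $ i" for k
  proof (induction k)
    case 0
    then show ?case using assms(10,11) by simp
  next
    case (Suc k)
    obtain QA QB where e1: "sdq sel rw \<gamma> \<alpha> QA0 QB0 smp k = (QA,QB)" by (cases "sdq sel rw \<gamma> \<alpha> QA0 QB0 smp k") auto
    obtain QAU QBU where e2: "upper P rw \<gamma> d \<alpha> sel Qs QA0 QB0 QAU0 QBU0 smp k = (QAU,QBU)"
      by (cases "upper P rw \<gamma> d \<alpha> sel Qs QA0 QB0 QAU0 QBU0 smp k") auto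
    have hA: "\<forall>i. (QAU - Qs) $ i \<ge> (QA - Qs) $ i" and hB: "\<forall>i. (QBU - Qs) $ i \<ge> (QB - Qs) $ i"
      using Suc.IH unfolding e1 e2 by auto
    show ?case
      unfolding upper.simps sdq.simps e1 e2 prod.case fst_conv snd_conv
      using step_le[OF assms(1,2,4,5,6,7,9) hA, of sel QB "smp k"] step_le[OF assms(1,2,4,5,6,7,9) hB, of sel QA "smp k"]
      by blast
  qed
  then show ?thesis by blast
qed

end
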